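(* Consider Setting B with the regular nodes running Algorithm 2 (any graph sequence, any adversarial behavior). Let $i\in(\mathcal V\setminus\mathcal S)\cap\mathcal R$ and $k\in\mathbb N_+$ with $\tau_i[k]\neq\omega$. Then, componentwise (slot by slot), $$\mathbf d_i[k+1]\le \mathbf d_i[k]+\mathbf 1_{2f+1},\qquad\text{and}\qquad \tau_i[k+1]\le\tau_i[k]+1,$$ where $\mathbf d_i[k]\in\mathbb N^{2f+1}$ is the vector of stored indices $d_{i,l}$, $l\in\mathcal M_i$, arranged by storage slot, at time $k$ after the append operations of step $k$ and before the increment at the end of step $k$ (so that (F) sets $\tau_i[k+1]=\max_p(\mathbf d_i[k])_p+1$).
   Context: Setting B. Scalar system $x[k+1]=ax[k]$, $a\in\mathbb R$, monitored by nodes $\mathcal V=\{1,\dots,N\}$ with measurements $y_i[k]=c_ix[k]$, $c_i\in\mathbb R$. Source set $\mathcal S=\{i\in\mathcal V:c_i\neq0\}$. Time-varying directed graphs $\mathcal G[k]=(\mathcal V,\mathcal E[k])$, $\mathcal N_i[k]=\{l\ne i:(l,i)\in\mathcal E[k]\}$; the union graph over an interval has the union of the edge sets. An unknown set $\mathcal A\subseteq\mathcal V$ of adversarial nodes with $|\mathcal A|\le f$ ($f$-total model; $\mathcal A$ may intersect $\mathcal S$); $\mathcal R=\mathcal V\setminus\mathcal A$ are regular. Adversaries are Byzantine: at each time they may send arbitrary, possibly different values (of both estimate and freshness index) to different out-neighbors, or send nothing, and may collude. At each time $k$, each node $l$ sends to its out-neighbors a pair (estimate, freshness index); regular $l$ sends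 its true $(\hat x_l[k],\tau_l[k])$. Algorithm 2 (executed by regular nodes). Regular source $i\in\mathcal S$: $\tau_i[k]=0$ for all $k$ and $\hat x_i[k+1]=a\hat x_i[k]+l_i(y_i[k]-c_i\hat x_i[k])$ with observer gain $l_i$. Regular non-source $i$: keeps $\hat x_i[k]$ (arbitrary initial), $\tau_i[k]\in\mathbb N\cup\{\omega\}$ with $\tau_i[0]=\omega$, and a list $\mathcal M_i$ of distinct node labels (initially empty, at most $2f+1$ entries, stored in $2f+1$ slots) with, for each $l\in\mathcal M_i$, a stored estimate $v_{i,l}$, stored index $d_{i,l}\in\mathbb N$ and time stamp $\phi_{i,l}$. At time $k$ let $\mathcal J_i[k]$ be the set of $l\in\mathcal N_i[k]$ whose reported index $\tau_l[k]$ lies in $\mathbb N$ and satisfies $\tau_l[k]\le k$. "Appending $l$ at time $k$" means: put $l$ in $\mathcal M_i$ (if absent), set $v_{i,l}=\hat x_l[k]$, $d_{i,l}=\tau_l[k]$ (reported values), $\phi_{i,l}=k$. Filtering update (F) at time $k$ (requires $|\mathcal M_i|=2f+1$): set $\tau_i[k+1]=\max_{l\in\mathcal M_i}d_{i,l}+1$; form $\bar x_{i,l}[k]=a^{k-\phi_{i,l}}v_{i,l}$ for $l\in\mathcal M_i$; discard the $f$ largest and $f$ smallest of these $2f+1$ values, call the remaining one $\bar x_i[k]$, and set $\hat x_i[k+1]=a\bar x_i[k]$. Case $\tau_i[k]=\omega$: let $\mathcal J'=\mathcal J_i[k]\setminus\mathcal M_i$. If $|\mathcal M_i|+|\mathcal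 J'|<2f+1$, append every $l\in\mathcal J'$, set $\tau_i[k+1]=\omega$ and $\hat x_i[k+1]=a\hat x_i[k]$. Otherwise append the $2f+1-|\mathcal M_i|$ nodes of $\mathcal J'$ with smallest reported indices (ties broken arbitrarily) and perform (F). Case $\tau_i[k]\ne\omega$: for each $l\in\mathcal J_i[k]\cap\mathcal M_i$ with reported $\tau_l[k]<d_{i,l}$, append $l$ (refreshing its entries); then rank the nodes of $\mathcal M_i\cup(\mathcal J_i[k]\setminus\mathcal M_i)$ by index ($d_{i,l}$ for $l\in\mathcal M_i$, reported $\tau_l[k]$ otherwise), keep the $2f+1$ with smallest index (ties arbitrary), appending newcomers and deleting dropped nodes (a retained node keeps its storage slot; a newcomer occupies the slot of a dropped node), and perform (F). In all cases, after the step every stored $d_{i,l}$ is incremented by $1$, and $\mathcal M_i$, $v$, $\phi$ carry over to time $k+1$. *)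

theory Defs
  imports Main "HOL.Real"
begin

text \<open>Setting B, Algorithm 2.  Freshness indices live in nat option; None plays the role of omega.
A stored entry of the list M_i is a tuple (label l, estimate v, index d, time stamp phi).
The list M_i is stored in 2f+1 slots; a slot vector is a map from slot numbers (p < 2f+1)
to optional entries (None = empty slot).\<close>

type_synonym 'n entry = "'n \<times> real \<times> nat \<times> nat"
type_synonym 'n slots = "nat \<Rightarrow> 'n entry option"
type_synonym 'n msg = "(real \<times> nat option) option"  \<comment> \<open>None = nothing sent\<close>

definition ent_l :: "'n entry \<Rightarrow> 'n" where "ent_l e = fst e"
definition ent_v :: "'n entry \<Rightarrow> real" where "ent_v e = fst (snd e)"
definition ent_d :: "'n entry \<Rightarrow> nat" where "ent_d e = fst (snd (snd e))"
definition ent_phi :: "'n entry \<Rightarrow> nat" where "ent_phi e = snd (snd (snd e))"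

definition Nin :: "(nat \<Rightarrow> ('n \<times> 'n) set) \<Rightarrow> 'n \<Rightarrow> nat \<Rightarrow> 'n set" where
  "Nin E i k = {l. l \<noteq> i \<and> (l, i) \<in> E k}"

definition rep_x :: "'n msg \<Rightarrow> real" where "rep_x r = fst (the r)"
definition rep_t :: "'n msg \<Rightarrow> nat" where "rep_t r = the (snd (the r))"

definition Jset :: "nat \<Rightarrow> 'n set \<Rightarrow> ('n \<Rightarrow> 'n msg) \<Rightarrow> 'n set" where
  "Jset k N rep = {l \<in> N. \<exists>x t. rep l = Some (x, Some t) \<and> t \<le> k}"

definition new_entry :: "nat \<Rightarrow> ('n \<Rightarrow> 'n msg) \<Rightarrow> 'n \<Rightarrow> 'n entry" where
  "new_entry k rep l = (l, rep_x (rep l), rep_t (rep l), k)"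

definition labels :: "nat \<Rightarrow> 'n slots \<Rightarrow> 'n set" where
  "labels m S = (\<lambda>p. ent_l (the (S p))) ` {p. p < m \<and> S p \<noteq> None}"

definition append_into :: "nat \<Rightarrow> ('n \<Rightarrow> 'n entry) \<Rightarrow> 'n slots \<Rightarrow> 'n set \<Rightarrow> 'n slots \<Rightarrow> bool" where
  "append_into m newe S B T \<longleftrightarrow>
     (\<exists>Q g. Q \<subseteq> {p. p < m \<and> S p = None} \<and> bij_betw g Q B \<and>
        (\<forall>p\<in>Q. T p = Some (newe (g p))) \<and>
        (\<forall>p. p < m \<and> S p \<noteq> None \<longrightarrow> T p = S p) \<and>
        (\<forall>p. p < m \<and> S p = None \<and> p \<notin> Q \<longrightarrow> T p = None) \<and>
        (\<forall>p. m \<le> p \<longrightarrow> T p = None))"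

text \<open>Median of 2f+1 values: discard the f largest and f smallest.\<close>
definition median_trim :: "nat \<Rightarrow> real list \<Rightarrow> real" where
  "median_trim f xs = sort xs ! f"

definition filt :: "nat \<Rightarrow> real \<Rightarrow> nat \<Rightarrow> 'n slots \<Rightarrow> nat option \<Rightarrow> real \<Rightarrow> bool" where
  "filt f a k T tau' xh' \<longleftrightarrow>
     (\<forall>p < 2*f+1. T p \<noteq> None) \<and>
     tau' = Some (Max ((\<lambda>p. ent_d (the (T p))) ` {..<2*f+1}) + 1) \<and>
     xh' = a * median_trim f (map (\<lambda>p. a ^ (k - ent_phi (the (T p))) * ent_v (the (T p))) [0..<2*f+1])"

definition refresh :: "nat \<Rightarrow> 'n set \<Rightarrow> ('n \<Rightarrow> 'n msg) \<Rightarrow> 'n slots \<Rightarrow> 'n slots" where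
  "refresh k J rep S = (\<lambda>p. case S p of None \<Rightarrow> None
       | Some e \<Rightarrow> if ent_l e \<in> J \<and> rep_t (rep (ent_l e)) < ent_d e
                   then Some (new_entry k rep (ent_l e)) else Some e)"

definition idx_of :: "nat \<Rightarrow> ('n \<Rightarrow> 'n msg) \<Rightarrow> 'n slots \<Rightarrow> 'n \<Rightarrow> nat" where
  "idx_of m rep S l =
     (if \<exists>p<m. S p \<noteq> None \<and> ent_l (the (S p)) = l
      then ent_d (the (S (SOME p. p < m \<and> S p \<noteq> None \<and> ent_l (the (S p)) = l)))
      else rep_t (rep l))"

definition incr :: "'n slots \<Rightarrow> 'n slots" where
  "incr T = (\<lambda>p. map_option (\<lambda>(l, v, d, ph). (l, v, d + 1, ph)) (T p))"

text \<open>One step (time k) of Algorithm 2 at a regular non-source node with in-neighbourhood N and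
received messages rep: from state (xh, tau, S) via post-append slots T to state (xh', tau', S').\<close>
definition nstep :: "nat \<Rightarrow> real \<Rightarrow> nat \<Rightarrow> 'n set \<Rightarrow> ('n \<Rightarrow> 'n msg) \<Rightarrow>
    real \<Rightarrow> nat option \<Rightarrow> 'n slots \<Rightarrow> 'n slots \<Rightarrow> real \<Rightarrow> nat option \<Rightarrow> 'n slots \<Rightarrow> bool" where
  "nstep f a k N rep xh tau S T xh' tau' S' \<longleftrightarrow>
    (let m = 2*f+1; J = Jset k N rep; newe = new_entry k rep in
     S' = incr T \<and>
     (if tau = None then
        (let L0 = labels m S; J' = J - L0 in
          (card L0 + card J' < m \<and> append_into m newe S J' T \<and> tau' = None \<and> xh' = a * xh)
        \<or> (m \<le> card L0 + card J' \<and>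
            (\<exists>B. B \<subseteq> J' \<and> card B = m - card L0 \<and>
                 (\<forall>l\<in>B. \<forall>l'\<in>J' - B. rep_t (rep l) \<le> rep_t (rep l')) \<and>
                 append_into m newe S B T) \<and>
            filt f a k T tau' xh'))
      else
        (let S1 = refresh k J rep S; L0 = labels m S1; C = L0 \<union> J;
             idx = idx_of m rep S1 in
          \<exists>K. K \<subseteq> C \<and> card K = m \<and> (\<forall>l\<in>K. \<forall>l'\<in>C - K. idx l \<le> idx l') \<and>
            (\<forall>p<m. S1 p \<noteq> None \<and> ent_l (the (S1 p)) \<in> K \<longrightarrow> T p = S1 p) \<and>
            (\<forall>p<m. S1 p = None \<longrightarrow> T p = None) \<and>
            (\<forall>p. m \<le> p \<longrightarrow> T p = None) \<and>
            (\<exists>g. bij_betw g {p. p < m \<and> S1 p \<noteq> None \<and> ent_l (the (S1 p)) \<notin> K} (K - L0) \<and>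
                 (\<forall>p. p < m \<and> S1 p \<noteq> None \<and> ent_l (the (S1 p)) \<notin> K \<longrightarrow>
                      T p = Some (newe (g p)))) \<and>
            filt f a k T tau' xh')))"

text \<open>A run of the whole network (Setting B, Algorithm 2).  xs: system state; xh, tau: estimate and
freshness index of each node; sl i k: slots of node i at the start of step k; mid i k: slots of
node i at step k after the append operations and before the increment.  msg k l j: what node l
sends to j at time k.\<close>
definition alg2_run ::
  "real \<Rightarrow> ('n \<Rightarrow> real) \<Rightarrow> ('n \<Rightarrow> real) \<Rightarrow> nat \<Rightarrow> (nat \<Rightarrow> ('n \<times> 'n) set) \<Rightarrow> 'n set \<Rightarrow>
   (nat \<Rightarrow> 'n \<Rightarrow> 'n \<Rightarrow> 'n msg) \<Rightarrow> (nat \<Rightarrow> real) \<Rightarrow> ('n \<Rightarrow> nat \<Rightarrow> real) \<Rightarrow>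
   ('n \<Rightarrow> nat \<Rightarrow> nat option) \<Rightarrow> ('n \<Rightarrow> nat \<Rightarrow> 'n slots) \<Rightarrow> ('n \<Rightarrow> nat \<Rightarrow> 'n slots) \<Rightarrow> bool" where
  "alg2_run a c L f E A msg xs xh tau sl mid \<longleftrightarrow>
     (\<forall>k. xs (Suc k) = a * xs k) \<and>
     (\<forall>l k j. l \<notin> A \<longrightarrow> msg k l j = Some (xh l k, tau l k)) \<and>
     (\<forall>i. i \<notin> A \<and> c i \<noteq> 0 \<longrightarrow>
        (\<forall>k. tau i k = Some 0 \<and>
             xh i (Suc k) = a * xh i k + L i * (c i * xs k - c i * xh i k))) \<and>
     (\<forall>i. i \<notin> A \<and> c i = 0 \<longrightarrow>
        tau i 0 = None \<and> sl i 0 = (\<lambda>p. None) \<and>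
        (\<forall>k. nstep f a k (Nin E i k) (\<lambda>l. msg k l i) (xh i k) (tau i k) (sl i k) (mid i k)
                   (xh i (Suc k)) (tau i (Suc k)) (sl i (Suc k))))"

definition dvec :: "'n slots \<Rightarrow> nat \<Rightarrow> nat" where
  "dvec T p = (case T p of None \<Rightarrow> 0 | Some e \<Rightarrow> ent_d e)"

end

theory Submission
  imports Defs
begin

definition dsl :: "nat \<Rightarrow> 'n slots \<Rightarrow> bool" where
  "dsl m S \<longleftrightarrow> (\<forall>p q. p < m \<longrightarrow> q < m \<longrightarrow> S p \<noteq> None \<longrightarrow> S q \<noteq> None \<longrightarrow>
      ent_l (the (S p)) = ent_l (the (S q)) \<longrightarrow> p = q)"

lemma dslD: "dsl m S \<Longrightarrow> p < m \<Longrightarrow> q < m \<Longrightarrow> S p \<noteq> None \<Longrightarrow> S q \<noteq> None \<Longrightarrow>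
      ent_l (the (S p)) = ent_l (the (S q)) \<Longrightarrow> p = q"
  unfolding dsl_def by blast

lemma ne_l[simp]: "ent_l (new_entry k rep l) = l"
  by (simp add: new_entry_def ent_l_def)
lemma ne_d[simp]: "ent_d (new_entry k rep l) = rep_t (rep l)"
  by (simp add: new_entry_def ent_d_def)

lemma refresh_None[simp]: "(refresh k J rep S p = None) = (S p = None)"
  by (cases "S p") (auto simp: refresh_def new_entry_def)
lemma refresh_l: "S p \<noteq> None \<Longrightarrow> ent_l (the (refresh k J rep S p)) = ent_l (the (S p))"
  by (cases "S p") (auto simp: refresh_def)
lemma refresh_d: "S p \<noteq> None \<Longrightarrow> ent_d (the (refresh k J rep S p)) \<le> ent_d (the (S p))"
  by (cases "S p") (auto simp: refresh_def)

lemma incr_None[simp]: "(incr T p = None) = (T p = None)"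
  by (simp add: incr_def)
lemma incr_l: "T p \<noteq> None \<Longrightarrow> ent_l (the (incr T p)) = ent_l (the (T p))"
  by (auto simp: incr_def ent_l_def)
lemma incr_d: "T p \<noteq> None \<Longrightarrow> ent_d (the (incr T p)) = ent_d (the (T p)) + 1"
  by (auto simp: incr_def ent_d_def)

lemma labels_iff: "l \<in> labels m S \<longleftrightarrow> (\<exists>p<m. S p \<noteq> None \<and> ent_l (the (S p)) = l)"
  by (auto simp: labels_def)

lemma dsl_incr: "dsl m T \<Longrightarrow> dsl m (incr T)"
  unfolding dsl_def by (metis incr_None incr_l)

lemma dsl_refresh: "dsl m S \<Longrightarrow> dsl m (refresh k J rep S)"
  unfolding dsl_def by (metis refresh_None refresh_l)

lemma dsl_append:
  assumes "append_into m (new_entry k rep) S B T" "dsl m S" "B \<inter> labels m S = {}"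
  shows "dsl m T"
proof -
  obtain Q g where Q: "Q \<subseteq> {p. p < m \<and> S p = None}" "bij_betw g Q B"
    "\<forall>p\<in>Q. T p = Some (new_entry k rep (g p))"
    "\<forall>p. p < m \<and> S p \<noteq> None \<longrightarrow> T p = S p"
    "\<forall>p. p < m \<and> S p = None \<and> p \<notin> Q \<longrightarrow> T p = None"
    using assms(1) unfolding append_into_def by auto
  have inj: "inj_on g Q" using Q(2) by (simp add: bij_betw_def)
  have gB: "\<And>p. p \<in> Q \<Longrightarrow> g p \<in> B" using Q(2) by (auto simp add: bij_betw_def)
  have QS: "\<And>p. p \<in> Q \<Longrightarrow> S p = None" using Q(1) by auto
  have cases: "\<And>p. p < m \<Longrightarrow> T p \<noteq> None \<Longrightarrow>
      (S p \<noteq> None \<and> T p = S p) \<or> (p \<in> Q \<and> S p = None \<and> T p = Some (new_entry k rep (g p)))"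
  proof -
    fix p assume p: "p < m" "T p \<noteq> None"
    show "(S p \<noteq> None \<and> T p = S p) \<or> (p \<in> Q \<and> S p = None \<and> T p = Some (new_entry k rep (g p)))"
    proof (cases "S p = None")
      case False then show ?thesis using Q(4) p(1) by simp
    next
      case True
      show ?thesis
      proof (cases "p \<in> Q")
        case True2: True then show ?thesis using Q(3) True by simp
      next
        case False then have "T p = None" using Q(5) p(1) True by simp
        then show ?thesis using p(2) by simp
      qed
    qed
  qed
  have lab: "\<And>p. p < m \<Longrightarrow> S p \<noteq> None \<Longrightarrow> ent_l (the (S p)) \<notin> B"
  proof -
    fix p assume "p < m" "S p \<noteq> None"
    then have "ent_l (the (S p)) \<in> labels m S" unfolding labels_iff by blast
    then show "ent_l (the (S p)) \<notin> B" using assms(3) by auto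
  qed
  show ?thesis unfolding dsl_def
  proof (intro allI impI)
    fix p q assume pq: "p < m" "q < m" "T p \<noteq> None" "T q \<noteq> None"
      "ent_l (the (T p)) = ent_l (the (T q))"
    from cases[OF pq(1,3)] cases[OF pq(2,4)] pq(5) show "p = q"
    proof (elim disjE conjE)
      assume "S p \<noteq> None" "T p = S p" "S q \<noteq> None" "T q = S q"
        "ent_l (the (T p)) = ent_l (the (T q))"
      then show "p = q" using dslD[OF assms(2) pq(1,2)] by simp
    next
      assume "S p \<noteq> None" "T p = S p" "q \<in> Q" "T q = Some (new_entry k rep (g q))"
        "ent_l (the (T p)) = ent_l (the (T q))"
      then have "ent_l (the (S p)) = g q" by simp
      then show "p = q" using lab[OF pq(1)] gB[of q] \<open>q \<in> Q\<close> \<open>S p \<noteq> None\<close> by simp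
    next
      assume "p \<in> Q" "T p = Some (new_entry k rep (g p))" "S q \<noteq> None" "T q = S q"
        "ent_l (the (T p)) = ent_l (the (T q))"
      then have "ent_l (the (S q)) = g p" by simp
      then show "p = q" using lab[OF pq(2)] gB[of p] \<open>p \<in> Q\<close> \<open>S q \<noteq> None\<close> by simp
    next
      assume "p \<in> Q" "T p = Some (new_entry k rep (g p))" "q \<in> Q"
        "T q = Some (new_entry k rep (g q))" "ent_l (the (T p)) = ent_l (the (T q))"
      then show "p = q" using inj by (simp add: inj_on_eq_iff)
    qed
  qed
qed

lemma omega_app:
  assumes "nstep f a k N rep xh tau S T xh' tau' S'" "tau = None"
  shows "\<exists>B. B \<subseteq> Jset k N rep - labels (2*f+1) S \<and> append_into (2*f+1) (new_entry k rep) S B T"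
proof -
  let ?m = "2*f+1"
  let ?J' = "Jset k N rep - labels ?m S"
  let ?L0 = "labels ?m S"
  have H: "(card ?L0 + card ?J' < ?m \<and> append_into ?m (new_entry k rep) S ?J' T \<and> tau' = None \<and> xh' = a * xh)
        \<or> (?m \<le> card ?L0 + card ?J' \<and>
            (\<exists>B. B \<subseteq> ?J' \<and> card B = ?m - card ?L0 \<and>
                 (\<forall>l\<in>B. \<forall>l'\<in>?J' - B. rep_t (rep l) \<le> rep_t (rep l')) \<and>
                 append_into ?m (new_entry k rep) S B T) \<and>
            filt f a k T tau' xh')"
    using assms(1) unfolding nstep_def Let_def if_P[OF assms(2)] by (rule conjunct2)
  then show ?thesis
  proof (elim disjE conjE exE)
    assume "append_into ?m (new_entry k rep) S ?J' T"
    then show ?thesis by blast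
  next
    fix B assume "B \<subseteq> ?J'" "append_into ?m (new_entry k rep) S B T"
    then show ?thesis by blast
  qed
qed

lemma nonomega:
  assumes "nstep f a k N rep xh tau S T xh' tau' S'" "tau \<noteq> None"
  defines "S1 \<equiv> refresh k (Jset k N rep) rep S"
  defines "L0 \<equiv> labels (2*f+1) S1"
  defines "C \<equiv> L0 \<union> Jset k N rep"
  defines "idx \<equiv> idx_of (2*f+1) rep S1"
  obtains K g where "K \<subseteq> C" "\<forall>l\<in>K. \<forall>l'\<in>C - K. idx l \<le> idx l'"
      "\<forall>p<2*f+1. S1 p \<noteq> None \<and> ent_l (the (S1 p)) \<in> K \<longrightarrow> T p = S1 p"
      "\<forall>p<2*f+1. S1 p = None \<longrightarrow> T p = None"
      "bij_betw g {p. p < 2*f+1 \<and> S1 p \<noteq> None \<and> ent_l (the (S1 p)) \<notin> K} (K - L0)"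
      "\<forall>p. p < 2*f+1 \<and> S1 p \<noteq> None \<and> ent_l (the (S1 p)) \<notin> K \<longrightarrow>
                      T p = Some (new_entry k rep (g p))"
      "filt f a k T tau' xh'"
proof -
  have H: "\<exists>K. K \<subseteq> C \<and> card K = 2*f+1 \<and> (\<forall>l\<in>K. \<forall>l'\<in>C - K. idx l \<le> idx l') \<and>
            (\<forall>p<2*f+1. S1 p \<noteq> None \<and> ent_l (the (S1 p)) \<in> K \<longrightarrow> T p = S1 p) \<and>
            (\<forall>p<2*f+1. S1 p = None \<longrightarrow> T p = None) \<and>
            (\<forall>p. 2*f+1 \<le> p \<longrightarrow> T p = None) \<and>
            (\<exists>g. bij_betw g {p. p < 2*f+1 \<and> S1 p \<noteq> None \<and> ent_l (the (S1 p)) \<notin> K} (K - L0) \<and>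
                 (\<forall>p. p < 2*f+1 \<and> S1 p \<noteq> None \<and> ent_l (the (S1 p)) \<notin> K \<longrightarrow>
                      T p = Some (new_entry k rep (g p)))) \<and>
            filt f a k T tau' xh'"
    using assms(1) unfolding nstep_def Let_def if_not_P[OF assms(2)] S1_def L0_def C_def idx_def
    by (rule conjunct2)
  then show ?thesis
  proof (elim exE conjE)
    fix K g assume "K \<subseteq> C" "\<forall>l\<in>K. \<forall>l'\<in>C - K. idx l \<le> idx l'"
      "\<forall>p<2*f+1. S1 p \<noteq> None \<and> ent_l (the (S1 p)) \<in> K \<longrightarrow> T p = S1 p"
      "\<forall>p<2*f+1. S1 p = None \<longrightarrow> T p = None"
      "bij_betw g {p. p < 2*f+1 \<and> S1 p \<noteq> None \<and> ent_l (the (S1 p)) \<notin> K} (K - L0)"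
      "\<forall>p. p < 2*f+1 \<and> S1 p \<noteq> None \<and> ent_l (the (S1 p)) \<notin> K \<longrightarrow>
                      T p = Some (new_entry k rep (g p))"
      "filt f a k T tau' xh'"
    then show ?thesis by (rule that)
  qed
qed

lemma dsl_step:
  assumes "nstep f a k N rep xh tau S T xh' tau' S'" "dsl (2*f+1) S"
  shows "dsl (2*f+1) S'"
proof -
  let ?m = "2*f+1"
  have S': "S' = incr T" using assms(1) unfolding nstep_def Let_def by (rule conjunct1)
  have "dsl ?m T"
  proof (cases "tau = None")
    case True
    obtain B where B: "B \<subseteq> Jset k N rep - labels ?m S" "append_into ?m (new_entry k rep) S B T"
      using omega_app[OF assms(1) True] by blast
    have "B \<inter> labels ?m S = {}" using B(1) by blast
    then show ?thesis using dsl_append[OF B(2) assms(2)] by blast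
  next
    case False
    let ?S1 = "refresh k (Jset k N rep) rep S"
    let ?L0 = "labels ?m ?S1"
    obtain K g where K0: "K \<subseteq> ?L0 \<union> Jset k N rep"
      "\<forall>l\<in>K. \<forall>l'\<in>(?L0 \<union> Jset k N rep) - K. idx_of ?m rep ?S1 l \<le> idx_of ?m rep ?S1 l'"
      "\<forall>p<?m. ?S1 p \<noteq> None \<and> ent_l (the (?S1 p)) \<in> K \<longrightarrow> T p = ?S1 p"
      "\<forall>p<?m. ?S1 p = None \<longrightarrow> T p = None"
      "bij_betw g {p. p < ?m \<and> ?S1 p \<noteq> None \<and> ent_l (the (?S1 p)) \<notin> K} (K - ?L0)"
      "\<forall>p. p < ?m \<and> ?S1 p \<noteq> None \<and> ent_l (the (?S1 p)) \<notin> K \<longrightarrow>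
                      T p = Some (new_entry k rep (g p))"
      "filt f a k T tau' xh'"
      by (rule nonomega[OF assms(1) False])
    note K = K0(3,4,5,6)
    let ?P = "{p. p < ?m \<and> ?S1 p \<noteq> None \<and> ent_l (the (?S1 p)) \<notin> K}"
    have inj: "inj_on g ?P" using K(3) by (simp add: bij_betw_def)
    have gB: "\<And>p. p \<in> ?P \<Longrightarrow> g p \<in> K - ?L0" using K(3) by (auto simp add: bij_betw_def)
    have D1: "dsl ?m ?S1" by (rule dsl_refresh[OF assms(2)])
    have cases: "\<And>p. p < ?m \<Longrightarrow> T p \<noteq> None \<Longrightarrow> ?S1 p \<noteq> None \<and>
      ((ent_l (the (?S1 p)) \<in> K \<and> T p = ?S1 p) \<or> (p \<in> ?P \<and> T p = Some (new_entry k rep (g p))))"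
    proof -
      fix p assume p: "p < ?m" "T p \<noteq> None"
      have sp: "?S1 p \<noteq> None" using K(2) p by auto
      show "?S1 p \<noteq> None \<and>
      ((ent_l (the (?S1 p)) \<in> K \<and> T p = ?S1 p) \<or> (p \<in> ?P \<and> T p = Some (new_entry k rep (g p))))"
      proof (cases "ent_l (the (?S1 p)) \<in> K")
        case True then show ?thesis using K(1) p(1) sp by simp
      next
        case False then show ?thesis using K(4) p(1) sp by simp
      qed
    qed
    have lab: "\<And>p. p < ?m \<Longrightarrow> ?S1 p \<noteq> None \<Longrightarrow> ent_l (the (?S1 p)) \<in> ?L0"
      unfolding labels_iff by blast
    show ?thesis unfolding dsl_def
    proof (intro allI impI)
      fix p q assume pq: "p < ?m" "q < ?m" "T p \<noteq> None" "T q \<noteq> None"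
        "ent_l (the (T p)) = ent_l (the (T q))"
      from cases[OF pq(1,3)] cases[OF pq(2,4)] pq(5) show "p = q"
      proof (elim disjE conjE)
        assume "?S1 p \<noteq> None" "T p = ?S1 p" "?S1 q \<noteq> None" "T q = ?S1 q"
          "ent_l (the (T p)) = ent_l (the (T q))"
        then show "p = q" using dslD[OF D1 pq(1,2)] by simp
      next
        assume "?S1 p \<noteq> None" "T p = ?S1 p" "q \<in> ?P" "T q = Some (new_entry k rep (g q))"
          "ent_l (the (T p)) = ent_l (the (T q))"
        then have "ent_l (the (?S1 p)) = g q" by simp
        then show "p = q" using lab[OF pq(1)] gB[of q] \<open>q \<in> ?P\<close> \<open>?S1 p \<noteq> None\<close> by simp
      next
        assume "p \<in> ?P" "T p = Some (new_entry k rep (g p))" "?S1 q \<noteq> None" "T q = ?S1 q"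
          "ent_l (the (T p)) = ent_l (the (T q))"
        then have "ent_l (the (?S1 q)) = g p" by simp
        then show "p = q" using lab[OF pq(2)] gB[of p] \<open>p \<in> ?P\<close> \<open>?S1 q \<noteq> None\<close> by simp
      next
        assume "p \<in> ?P" "T p = Some (new_entry k rep (g p))" "q \<in> ?P"
          "T q = Some (new_entry k rep (g q))" "ent_l (the (T p)) = ent_l (the (T q))"
        then show "p = q" using inj by (simp add: inj_on_eq_iff)
      qed
    qed
  qed
  then show ?thesis using S' dsl_incr by blast
qed

lemma step_some:
  assumes "nstep f a k N rep xh tau S T xh' tau' S'" "tau \<noteq> None"
  shows "S' = incr T \<and> filt f a k T tau' xh'"
  using assms unfolding nstep_def Let_def by auto

lemma step_filt:
  assumes "nstep f a k N rep xh tau S T xh' tau' S'" "tau' \<noteq> None"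
  shows "S' = incr T \<and> filt f a k T tau' xh'"
  using assms unfolding nstep_def Let_def by (cases "tau = None") auto

lemma key:
  assumes "nstep f a k N rep xh tau S T xh' tau' S'" "tau \<noteq> None" "dsl (2*f+1) S"
    "\<forall>p<2*f+1. S p \<noteq> None" "p < 2*f+1"
  shows "T p \<noteq> None \<and> ent_d (the (T p)) \<le> ent_d (the (S p))"
proof -
  let ?m = "2*f+1"
  let ?J = "Jset k N rep"
  let ?S1 = "refresh k ?J rep S"
  let ?L0 = "labels ?m ?S1"
  let ?C = "?L0 \<union> ?J"
  let ?idx = "idx_of ?m rep ?S1"
  obtain K g where K0: "K \<subseteq> ?C" "\<forall>l\<in>K. \<forall>l'\<in>?C - K. ?idx l \<le> ?idx l'"
      "\<forall>p<?m. ?S1 p \<noteq> None \<and> ent_l (the (?S1 p)) \<in> K \<longrightarrow> T p = ?S1 p"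
      "\<forall>p<?m. ?S1 p = None \<longrightarrow> T p = None"
      "bij_betw g {p. p < ?m \<and> ?S1 p \<noteq> None \<and> ent_l (the (?S1 p)) \<notin> K} (K - ?L0)"
      "\<forall>p. p < ?m \<and> ?S1 p \<noteq> None \<and> ent_l (the (?S1 p)) \<notin> K \<longrightarrow>
                      T p = Some (new_entry k rep (g p))"
      "filt f a k T tau' xh'"
    by (rule nonomega[OF assms(1,2)])
  note K = K0(1,2,3,5,6,7)
  have TN: "T p \<noteq> None" using K(6) assms(5) unfolding filt_def by blast
  have Sp: "S p \<noteq> None" using assms(4) assms(5) by blast
  have sp: "?S1 p \<noteq> None" using Sp by simp
  have D1: "dsl ?m ?S1" by (rule dsl_refresh[OF assms(3)])
  have rd: "ent_d (the (?S1 p)) \<le> ent_d (the (S p))"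
    by (rule refresh_d[of S p, OF Sp])
  show ?thesis
  proof (cases "ent_l (the (?S1 p)) \<in> K")
    case True
    have "T p = ?S1 p" using K(3) True sp assms(5) by blast
    then show ?thesis using rd TN by simp
  next
    case False
    let ?l = "ent_l (the (?S1 p))"
    have pP: "p \<in> {p. p < ?m \<and> ?S1 p \<noteq> None \<and> ent_l (the (?S1 p)) \<notin> K}"
      using False sp assms(5) by blast
    have Tp: "T p = Some (new_entry k rep (g p))" using K(5) pP by blast
    have gK: "g p \<in> K - ?L0" using bij_betwE[OF K(4)] pP by blast
    have lL: "?l \<in> ?L0" unfolding labels_iff using sp assms(5) by blast
    hence lC: "?l \<in> ?C - K" using False by blast
    have i1: "?idx (g p) \<le> ?idx ?l" using K(2) gK lC by blast
    have nex: "\<not> (\<exists>q<?m. ?S1 q \<noteq> None \<and> ent_l (the (?S1 q)) = g p)"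
      using gK labels_iff[of "g p" ?m ?S1] by blast
    have i2: "?idx (g p) = rep_t (rep (g p))"
      unfolding idx_of_def by (rule if_not_P[OF nex])
    have ex: "\<exists>q<?m. ?S1 q \<noteq> None \<and> ent_l (the (?S1 q)) = ?l" using sp assms(5) by blast
    let ?q = "SOME q. q < ?m \<and> ?S1 q \<noteq> None \<and> ent_l (the (?S1 q)) = ?l"
    have qq: "?q < ?m \<and> ?S1 ?q \<noteq> None \<and> ent_l (the (?S1 ?q)) = ?l"
      by (rule someI_ex[OF ex[unfolded Ball_def]])
    have qp: "?q = p"
      using dslD[OF D1, of ?q p] qq sp assms(5) by (elim conjE) blast
    have i3: "?idx ?l = ent_d (the (?S1 p))"
      unfolding idx_of_def by (subst if_P[OF ex]) (simp only: qp)
    have "ent_d (the (T p)) = rep_t (rep (g p))" using Tp by simp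
    then have "ent_d (the (T p)) \<le> ent_d (the (S p))" using i1 i2 i3 rd by linarith
    then show ?thesis using TN by blast
  qed
qed

theorem lemma5:
  fixes a :: real and c L :: "'n::finite \<Rightarrow> real" and f :: nat
    and E :: "nat \<Rightarrow> ('n \<times> 'n) set" and A :: "'n set"
    and msg :: "nat \<Rightarrow> 'n \<Rightarrow> 'n \<Rightarrow> 'n msg" and xs :: "nat \<Rightarrow> real"
    and xh :: "'n \<Rightarrow> nat \<Rightarrow> real" and tau :: "'n \<Rightarrow> nat \<Rightarrow> nat option"
    and sl mid :: "'n \<Rightarrow> nat \<Rightarrow> 'n slots" and i :: 'n and k :: nat
  assumes "card A \<le> f"
    and "alg2_run a c L f E A msg xs xh tau sl mid"
    and "i \<notin> A" and "c i = 0"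
    and "1 \<le> k" and "tau i k \<noteq> None"
  shows "(\<forall>p < 2*f+1. dvec (mid i (Suc k)) p \<le> dvec (mid i k) p + 1) \<and>
         tau i (Suc k) \<noteq> None \<and> the (tau i (Suc k)) \<le> the (tau i k) + 1"
proof -
  define m where "m = 2*f+1"
  have run: "\<forall>k. nstep f a k (Nin E i k) (\<lambda>l. msg k l i) (xh i k) (tau i k) (sl i k) (mid i k)
                   (xh i (Suc k)) (tau i (Suc k)) (sl i (Suc k))" and s0: "sl i 0 = (\<lambda>p. None)"
    using assms(2,3,4) unfolding alg2_run_def by blast+
  have inv: "\<And>n. dsl m (sl i n)"
  proof -
    fix n show "dsl m (sl i n)"
    proof (induction n)
      case 0 then show ?case using s0 by (simp add: dsl_def)
    next
      case (Suc n) then show ?case using dsl_step run m_def by blast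
    qed
  qed
  have F: "\<And>j. tau i (Suc j) \<noteq> None \<Longrightarrow> sl i (Suc j) = incr (mid i j) \<and>
      (\<forall>p<m. mid i j p \<noteq> None) \<and>
      tau i (Suc j) = Some (Max ((\<lambda>p. ent_d (the (mid i j p))) ` {..<m}) + 1)"
  proof -
    fix j assume tj: "tau i (Suc j) \<noteq> None"
    have "sl i (Suc j) = incr (mid i j) \<and> filt f a j (mid i j) (tau i (Suc j)) (xh i (Suc j))"
      using step_filt[OF run[rule_format, of j] tj] .
    then show "sl i (Suc j) = incr (mid i j) \<and> (\<forall>p<m. mid i j p \<noteq> None) \<and>
      tau i (Suc j) = Some (Max ((\<lambda>p. ent_d (the (mid i j p))) ` {..<m}) + 1)"
      unfolding filt_def m_def by blast
  qed
  have B: "\<And>j p. tau i (Suc j) \<noteq> None \<Longrightarrow> p < m \<Longrightarrow> mid i (Suc j) p \<noteq> None \<and>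
        ent_d (the (mid i (Suc j) p)) \<le> ent_d (the (mid i j p)) + 1"
  proof -
    fix j p assume tj: "tau i (Suc j) \<noteq> None" and p: "p < m"
    have Fj: "sl i (Suc j) = incr (mid i j)" "\<forall>p<m. mid i j p \<noteq> None" using F[OF tj] by auto
    have Sn: "\<forall>p<m. sl i (Suc j) p \<noteq> None" using Fj by simp
    have "mid i (Suc j) p \<noteq> None \<and> ent_d (the (mid i (Suc j) p)) \<le> ent_d (the (sl i (Suc j) p))"
      using key[OF run[rule_format, of "Suc j"] tj] inv Sn p m_def by blast
    then show "mid i (Suc j) p \<noteq> None \<and>
        ent_d (the (mid i (Suc j) p)) \<le> ent_d (the (mid i j p)) + 1"
      using Fj incr_d[of "mid i j" p] p by (simp del: incr_None)
  qed
  obtain j where kj: "k = Suc j" using assms(5) by (cases k) auto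
  have tj: "tau i (Suc j) \<noteq> None" using assms(6) kj by simp
  have Fj: "\<forall>p<m. mid i j p \<noteq> None"
      "tau i (Suc j) = Some (Max ((\<lambda>p. ent_d (the (mid i j p))) ` {..<m}) + 1)"
    using F[OF tj] by auto
  have tk: "tau i (Suc k) \<noteq> None"
    using step_some[OF run[rule_format, of k] assms(6)] unfolding filt_def by auto
  have Fk: "\<forall>p<m. mid i k p \<noteq> None"
      "tau i (Suc k) = Some (Max ((\<lambda>p. ent_d (the (mid i k p))) ` {..<m}) + 1)"
  proof -
    show "\<forall>p<m. mid i k p \<noteq> None"
      "tau i (Suc k) = Some (Max ((\<lambda>p. ent_d (the (mid i k p))) ` {..<m}) + 1)"
      using F[OF tk] by auto
  qed
  have P1: "\<forall>p < 2*f+1. dvec (mid i (Suc k)) p \<le> dvec (mid i k) p + 1"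
  proof (intro allI impI)
    fix p assume p: "p < 2*f+1"
    then show "dvec (mid i (Suc k)) p \<le> dvec (mid i k) p + 1"
      using B[OF tk, of p] Fk m_def by (auto simp: dvec_def split: option.splits)
  qed
  have "Max ((\<lambda>p. ent_d (the (mid i k p))) ` {..<m})
        \<le> Max ((\<lambda>p. ent_d (the (mid i j p))) ` {..<m}) + 1"
  proof (subst Max_le_iff)
    show "finite ((\<lambda>p. ent_d (the (mid i k p))) ` {..<m})" by simp
    show "(\<lambda>p. ent_d (the (mid i k p))) ` {..<m} \<noteq> {}" using m_def by auto
    show "\<forall>x\<in>(\<lambda>p. ent_d (the (mid i k p))) ` {..<m}.
            x \<le> Max ((\<lambda>p. ent_d (the (mid i j p))) ` {..<m}) + 1"
    proof
      fix x assume "x \<in> (\<lambda>p. ent_d (the (mid i k p))) ` {..<m}"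
      then obtain p where p: "p < m" "x = ent_d (the (mid i k p))" by auto
      have "ent_d (the (mid i j p)) \<le> Max ((\<lambda>p. ent_d (the (mid i j p))) ` {..<m})"
        using p(1) by (intro Max_ge) auto
      then show "x \<le> Max ((\<lambda>p. ent_d (the (mid i j p))) ` {..<m}) + 1"
        using B[OF tj p(1)] p(2) kj by simp
    qed
  qed
  then show ?thesis using P1 Fj(2) Fk(2) kj by simp
qed

end
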